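(* Assume $X$ satisfies condition (i). Let $p\ge1$ and $d\ge2$. There exists a finite constant $C$ (depending on $p$, $d$ and the law of $X$) such that for all $t\ge1$ and all $x\in W^d$ with $x_{i+1}-x_i\ge1$ for $1\le i\le d-1$, \[\big(\mathbb E_x|\Delta(S(t))|^p\big)^{1/p}\le C\,\Delta(x)\,t^{d^2}.\]
   Context: $X$ is real with $\mathbb E X=0$, $\mathrm{Var}X=1$ and (i) $\mathbb E e^{\delta X}<\infty$ for $|\delta|<\delta_0$, some $\delta_0>0$. $(e_{ij})$ i.i.d. exponential(1), $(X_{ij})$ i.i.d. copies of $X$ independent of them; $S_j(t)=x_j+\sum_{i\ge1}X_{ij}\mathbf 1\{\sum_{k=1}^ie_{kj}\le t\}$, $j=1,\dots,d$, under $\mathbf P_x$. $W^d=\{x_1<\dots<x_d\}$, $\Delta(x)=\prod_{i<j}(x_j-x_i)$. *)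

theory Defs
  imports "HOL-Probability.Probability"
begin

text \<open>Vandermonde product Delta(x) = prod over 1 <= i < j <= d of (x j - x i);
  vectors in R^d are functions nat => real indexed by 1..d.\<close>
definition Delta :: "nat \<Rightarrow> (nat \<Rightarrow> real) \<Rightarrow> real" where
  "Delta d x = (\<Prod>j\<in>{1..d}. \<Prod>i\<in>{1..<j}. x j - x i)"

definition weyl_chamber :: "nat \<Rightarrow> (nat \<Rightarrow> real) set" where
  "weyl_chamber d = {x. \<forall>i\<in>{1..<d}. x i < x (Suc i)}"

text \<open>Compound Poisson walk:
  S_j(t) = x_j + sum_{i>=1} X_{ij} 1{e_{1j}+...+e_{ij} <= t}
  (the sum over i >= 1 is written as a series over i+1, i >= 0).\<close>
definition cp_walk ::
  "(nat \<Rightarrow> real) \<Rightarrow> (nat \<Rightarrow> nat \<Rightarrow> 'a \<Rightarrow> real) \<Rightarrow> (nat \<Rightarrow> nat \<Rightarrow> 'a \<Rightarrow> real)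
    \<Rightarrow> real \<Rightarrow> 'a \<Rightarrow> nat \<Rightarrow> real" where
  "cp_walk x e Xs t \<omega> j =
     x j + (\<Sum>i. Xs (Suc i) j \<omega> *
              (if (\<Sum>k\<in>{1..Suc i}. e k j \<omega>) \<le> t then 1 else 0))"

end

theory Submission
  imports Defs
begin

lemma exp_ge_pow_fact:
  fixes z :: real assumes "0 \<le> z"
  shows "z ^ n / fact n \<le> exp z"
proof -
  have "(\<Sum>m\<in>{n}. inverse (fact m) * z^m) \<le> (\<Sum>m. inverse (fact m) * z^m)"
    by (rule sum_le_suminf[OF summable_exp]) (use assms in auto)
  then show ?thesis by (simp add: exp_def field_simps)
qed

lemma abs_pow_le_exp:
  fixes y \<delta> :: real assumes "0 < \<delta>"
  shows "\<bar>y\<bar> ^ n \<le> fact n / \<delta> ^ n * (exp (\<delta> * y) + exp (- \<delta> * y))"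
proof -
  have "(\<delta> * \<bar>y\<bar>) ^ n / fact n \<le> exp (\<delta> * \<bar>y\<bar>)"
    using assms by (intro exp_ge_pow_fact) auto
  also have "\<dots> \<le> exp (\<delta> * y) + exp (- \<delta> * y)"
    by (cases "y \<ge> 0") (auto simp: add_increasing add_increasing2)
  finally have "\<delta>^n * \<bar>y\<bar>^n \<le> fact n * (exp (\<delta> * y) + exp (- \<delta> * y))"
    by (simp add: power_mult_distrib field_simps)
  then show ?thesis using assms by (simp add: field_simps)
qed

lemma (in prob_space) indep_vars_reindex:
  assumes ind: "indep_vars M' Y (f ` I)" and inj: "inj_on f I"
  shows "indep_vars (\<lambda>i. M' (f i)) (\<lambda>i. Y (f i)) I"
proof -
  have rv: "\<forall>i\<in>f`I. random_variable (M' i) (Y i)"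
   and isI: "indep_sets (\<lambda>i. { Y i -` A \<inter> space M | A. A \<in> sets (M' i)}) (f ` I)"
    using ind unfolding indep_vars_def2 by auto
  show ?thesis unfolding indep_vars_def2
  proof (intro conjI)
    show "\<forall>i\<in>I. random_variable (M' (f i)) (Y (f i))" using rv by auto
    show "indep_sets (\<lambda>i. {Y (f i) -` A \<inter> space M |A. A \<in> sets (M' (f i))}) I"
      unfolding indep_sets_def
    proof (intro conjI ballI allI impI)
      fix i assume "i \<in> I"
      then show "{Y (f i) -` A \<inter> space M |A. A \<in> sets (M' (f i))} \<subseteq> events"
        using isI unfolding indep_sets_def by auto
    next
      fix J A assume J: "J \<subseteq> I" "J \<noteq> {}" "finite J"
        and A: "A \<in> Pi J (\<lambda>i. {Y (f i) -` A \<inter> space M |A. A \<in> sets (M' (f i))})"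
      define B where "B = (\<lambda>k. A (inv_into J f k))"
      have injJ: "inj_on f J" using inj J by (auto intro: inj_on_subset)
      have BA: "\<And>j. j \<in> J \<Longrightarrow> B (f j) = A j"
        unfolding B_def using injJ by auto
      have Bin: "\<forall>k\<in>f`J. B k \<in> {Y k -` A \<inter> space M | A. A \<in> sets (M' k)}"
        using A by (auto simp: BA Pi_iff)
      have "prob (\<Inter>k\<in>f`J. B k) = (\<Prod>k\<in>f`J. prob (B k))"
        by (rule indep_setsD[OF isI _ _ _ Bin]) (use J in auto)
      moreover have "(\<Inter>k\<in>f`J. B k) = (\<Inter>j\<in>J. A j)" using BA by auto
      moreover have "(\<Prod>k\<in>f`J. prob (B k)) = (\<Prod>j\<in>J. prob (A j))"
        using injJ by (simp add: prod.reindex BA)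
      ultimately show "prob (\<Inter>j\<in>J. A j) = (\<Prod>j\<in>J. prob (A j))" by simp
    qed
  qed
qed

lemma nn_integral_erlang_laplace:
  fixes k :: nat and c :: real assumes c: "0 < c"
  shows "(\<integral>\<^sup>+ x. ennreal (erlang_density k 1 x * exp (- (c - 1) * x)) \<partial>lborel) = ennreal (1 / c ^ Suc k)"
proof -
  have eq: "\<And>x. indicator {0..} (x / c) = indicator {0..} x"
    using c by (simp add: field_simps split: split_indicator)
  have "(\<integral>\<^sup>+ x. ennreal (erlang_density k 1 x * exp (- (c - 1) * x)) \<partial>lborel) =
    (\<integral>\<^sup>+x. (1/(fact k * c^k)) * (ennreal ((c*x)^k * exp (- (c*x))) * indicator {0 ..} x) \<partial>lborel)"
    using c by (intro nn_integral_cong)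
       (auto simp: erlang_density_def power_mult_distrib ennreal_mult'[symmetric] mult_exp_exp algebra_simps split: split_indicator)
  also have "\<dots> = (1/(fact k * c^k)) * (\<integral>\<^sup>+x. ennreal ((c*x)^k * exp (- (c*x))) * indicator {0 ..} x \<partial>lborel)"
    by (intro nn_integral_cmult) auto
  also have "\<dots> = ennreal (1/(fact k * c^k)) * ((1/c) * (\<integral>\<^sup>+x. ennreal (x^k * exp (- x)) * indicator {0 ..} x \<partial>lborel))"
    using c by (subst nn_integral_real_affine[where c="1 / c" and t=0]) (auto simp: field_simps eq)
  also have "\<dots> = ennreal (1 / c ^ Suc k)"
    using c by (subst nn_intergal_power_times_exp_Ici) (auto simp: ennreal_mult'[symmetric] field_simps)
  finally show ?thesis .
qed

lemma (in prob_space) erlang_chernoff: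
  assumes D: "distributed M lborel T (erlang_density k 1)" and lam: "0 < lam"
  shows "emeasure M {\<omega>\<in>space M. T \<omega> \<le> t} \<le> ennreal (exp (lam * t) / (1 + lam) ^ Suc k)"
proof -
  have Tm[measurable]: "T \<in> borel_measurable M" using distributed_measurable[OF D] by simp
  have "emeasure M {\<omega>\<in>space M. T \<omega> \<le> t} = (\<integral>\<^sup>+ \<omega>. indicator {\<omega>\<in>space M. T \<omega> \<le> t} \<omega> \<partial>M)"
    by (simp add: nn_integral_indicator)
  also have "\<dots> \<le> (\<integral>\<^sup>+ \<omega>. ennreal (exp (lam * t)) * ennreal (exp (- lam * T \<omega>)) \<partial>M)"
  proof (intro nn_integral_mono)
    fix \<omega> assume "\<omega> \<in> space M"
    have "T \<omega> \<le> t \<Longrightarrow> 1 \<le> exp (lam * t) * exp (- lam * T \<omega>)"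
      using lam by (simp add: mult_exp_exp algebra_simps mult_left_mono)
    then show "indicator {\<omega> \<in> space M. T \<omega> \<le> t} \<omega> \<le> ennreal (exp (lam * t)) * ennreal (exp (- lam * T \<omega>))"
      by (auto simp: indicator_def ennreal_mult'[symmetric] ennreal_ge_1)
  qed
  also have "\<dots> = ennreal (exp (lam * t)) * (\<integral>\<^sup>+ \<omega>. ennreal (exp (- lam * T \<omega>)) \<partial>M)"
    by (intro nn_integral_cmult) auto
  also have "(\<integral>\<^sup>+ \<omega>. ennreal (exp (- lam * T \<omega>)) \<partial>M) = (\<integral>\<^sup>+ x. ennreal (erlang_density k 1 x) * ennreal (exp (- lam * x)) \<partial>lborel)"
    by (rule distributed_nn_integral[OF D, symmetric]) auto
  also have "\<dots> = (\<integral>\<^sup>+ x. ennreal (erlang_density k 1 x * exp (- ((1 + lam) - 1) * x)) \<partial>lborel)"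
    by (intro nn_integral_cong) (simp add: ennreal_mult')
  also have "\<dots> = ennreal (1 / (1 + lam) ^ Suc k)"
    using lam by (intro nn_integral_erlang_laplace) auto
  finally show ?thesis by (simp add: ennreal_mult'[symmetric])
qed

lemma convex_pow_nonneg: "convex_on {0::real..} (\<lambda>x. x ^ N)"
proof (cases "even N")
  case True show ?thesis
    by (rule convex_on_subset[OF convex_power_even[OF True]]) (auto intro: convex_real_interval)
next
  case False then show ?thesis using convex_power_odd by blast
qed

lemma jensen_pow:
  fixes w y :: "'b \<Rightarrow> real"
  assumes K: "finite K" "K \<noteq> {}" and w: "\<And>k. k \<in> K \<Longrightarrow> 0 < w k"
    and y: "\<And>k. k \<in> K \<Longrightarrow> 0 \<le> y k" and N: "1 \<le> N"
  shows "(\<Sum>k\<in>K. w k * y k) ^ N \<le> (\<Sum>k\<in>K. w k) ^ (N - 1) * (\<Sum>k\<in>K. w k * y k ^ N)"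
proof -
  define W where "W = (\<Sum>k\<in>K. w k)"
  have W: "0 < W" unfolding W_def using K w by (intro sum_pos) auto
  have "(\<Sum>k\<in>K. (w k / W) *\<^sub>R y k) ^ N \<le> (\<Sum>k\<in>K. (w k / W) * y k ^ N)"
  proof (rule convex_on_sum[OF K convex_pow_nonneg])
    show "(\<Sum>k\<in>K. w k / W) = 1" using W by (simp add: W_def sum_divide_distrib[symmetric])
  qed (use w y W in \<open>auto intro: less_imp_le\<close>)
  also have "(\<Sum>k\<in>K. (w k / W) *\<^sub>R y k) = (\<Sum>k\<in>K. w k * y k) / W"
    by (simp add: sum_divide_distrib)
  also have "(\<Sum>k\<in>K. (w k / W) * y k ^ N) = (\<Sum>k\<in>K. w k * y k ^ N) / W"
    by (simp add: sum_divide_distrib)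
  finally have "(\<Sum>k\<in>K. w k * y k) ^ N / W ^ N \<le> (\<Sum>k\<in>K. w k * y k ^ N) / W"
    by (simp add: power_divide)
  then have "(\<Sum>k\<in>K. w k * y k) ^ N \<le> (\<Sum>k\<in>K. w k * y k ^ N) / W * W ^ N"
    using W by (simp add: divide_le_eq)
  also have "\<dots> = W ^ (N - 1) * (\<Sum>k\<in>K. w k * y k ^ N)"
    using W N by (cases N) auto
  finally show ?thesis by (simp add: W_def)
qed

lemma gap_ge:
  fixes x :: "nat \<Rightarrow> real"
  assumes g: "\<forall>i\<in>{1..<d}. x (Suc i) - x i \<ge> 1" and ij: "1 \<le> i" "i < j" "j \<le> d"
  shows "x j - x i \<ge> 1"
  using ij
proof (induction j)
  case 0 then show ?case by simp
next
  case (Suc j)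
  show ?case
  proof (cases "i = j")
    case True then show ?thesis using g Suc.prems by auto
  next
    case False
    then have "x j - x i \<ge> 1" using Suc by auto
    moreover have "x (Suc j) - x j \<ge> 1" using g Suc.prems by auto
    ultimately show ?thesis by linarith
  qed
qed

lemma Delta_nonneg:
  fixes x :: "nat \<Rightarrow> real"
  assumes g: "\<forall>i\<in>{1..<d}. x (Suc i) - x i \<ge> 1"
  shows "0 \<le> Delta d x"
  unfolding Delta_def
  by (intro prod_nonneg) (use gap_ge[OF g] in \<open>fastforce\<close>)

lemma Delta_bound:
  fixes x Y :: "nat \<Rightarrow> real"
  assumes g: "\<forall>i\<in>{1..<d}. x (Suc i) - x i \<ge> 1"
  shows "\<bar>Delta d (\<lambda>j. x j + Y j)\<bar> \<le> Delta d x * (1 + (\<Sum>l\<in>{1..d}. \<bar>Y l\<bar>)) ^ (\<Sum>j\<in>{1..d}. j - 1)"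
proof -
  define U where "U = (\<Sum>l\<in>{1..d}. \<bar>Y l\<bar>)"
  have U0: "0 \<le> U" unfolding U_def by (intro sum_nonneg) auto
  have key: "\<bar>(x j + Y j) - (x i + Y i)\<bar> \<le> (x j - x i) * (1 + U)"
    if "j \<in> {1..d}" "i \<in> {1..<j}" for i j
  proof -
    have xg: "x j - x i \<ge> 1" using gap_ge[OF g, of i j] that by auto
    have "\<bar>Y j\<bar> + \<bar>Y i\<bar> = (\<Sum>l\<in>{i,j}. \<bar>Y l\<bar>)" using that by auto
    also have "\<dots> \<le> U" unfolding U_def using that by (intro sum_mono2) auto
    finally have "\<bar>Y j\<bar> + \<bar>Y i\<bar> \<le> U" .
    then have "\<bar>(x j + Y j) - (x i + Y i)\<bar> \<le> (x j - x i) + U" using xg by linarith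
    also have "\<dots> \<le> (x j - x i) + (x j - x i) * U" using xg U0 by (simp add: mult_le_cancel_right1)
    finally show ?thesis by (simp add: algebra_simps)
  qed
  have "\<bar>Delta d (\<lambda>j. x j + Y j)\<bar> = (\<Prod>j\<in>{1..d}. \<Prod>i\<in>{1..<j}. \<bar>(x j + Y j) - (x i + Y i)\<bar>)"
    unfolding Delta_def by (simp add: abs_prod)
  also have "\<dots> \<le> (\<Prod>j\<in>{1..d}. \<Prod>i\<in>{1..<j}. (x j - x i) * (1 + U))"
    by (intro prod_mono conjI prod_nonneg) (auto intro: key)
  also have "\<dots> = (\<Prod>j\<in>{1..d}. (\<Prod>i\<in>{1..<j}. (x j - x i)) * (1 + U) ^ (j - 1))"
    by (simp add: prod.distrib)
  also have "\<dots> = Delta d x * (1 + U) ^ (\<Sum>j\<in>{1..d}. j - 1)"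
    by (simp add: prod.distrib Delta_def power_sum)
  finally show ?thesis by (simp add: U_def)
qed

lemma sum_a_bound:
  fixes lam t :: real and N n :: nat
  assumes lam: "0 < lam" and t: "0 \<le> t" and N: "1 \<le> N"
  shows "(\<Sum>i<n. (min 1 (exp (lam * t) / exp 2 ^ Suc i)) powr (1 / (2 * N)))
           \<le> lam * t + 1 + 1 / (1 - exp (- 1 / (2 * N)))"
proof -
  define s where "s = 1 / (2 * real N)"
  define r where "r = exp (- s)"
  have s: "0 < s" using N by (simp add: s_def)
  have r: "0 < r" "r < 1" using s by (auto simp: r_def)
  have trm: "(min 1 (exp (lam * t) / exp 2 ^ Suc i)) powr s
      \<le> (if real (Suc i) < lam * t then 1 else 0) + r ^ Suc i" for i
  proof (cases "real (Suc i) < lam * t")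
    case True
    have "(min 1 (exp (lam * t) / exp 2 ^ Suc i)) powr s \<le> 1"
      using s by (intro powr_le1) auto
    moreover have "0 \<le> r ^ Suc i" using r by simp
    ultimately show ?thesis using True by simp
  next
    case False
    have e: "exp 2 ^ Suc i = exp (2 * real (Suc i))"
      by (subst exp_of_nat_mult[symmetric]) (simp add: mult.commute)
    have "exp (lam * t) / exp 2 ^ Suc i = exp (lam * t - 2 * real (Suc i))"
      by (simp only: e exp_diff)
    also have "\<dots> \<le> exp (- real (Suc i))" using False by simp
    finally have "min 1 (exp (lam * t) / exp 2 ^ Suc i) \<le> exp (- real (Suc i))" by simp
    then have "(min 1 (exp (lam * t) / exp 2 ^ Suc i)) powr s \<le> exp (- real (Suc i)) powr s"
      using s by (intro powr_mono2) auto
    also have "\<dots> = exp (real (Suc i) * (- s))" by (simp add: powr_def algebra_simps)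
    also have "\<dots> = r ^ Suc i" by (simp only: r_def exp_of_nat_mult)
    finally show ?thesis using False by simp
  qed
  have "(\<Sum>i<n. (min 1 (exp (lam * t) / exp 2 ^ Suc i)) powr s)
      \<le> (\<Sum>i<n. (if real (Suc i) < lam * t then 1 else 0) + r ^ Suc i)"
    by (intro sum_mono trm)
  also have "\<dots> = real (card {i\<in>{..<n}. real (Suc i) < lam * t}) + (\<Sum>i<n. r ^ Suc i)"
    by (simp add: sum.distrib sum.If_cases Int_def conj_commute)
  also have "real (card {i\<in>{..<n}. real (Suc i) < lam * t}) \<le> lam * t + 1"
  proof -
    have "{i\<in>{..<n}. real (Suc i) < lam * t} \<subseteq> {..< nat \<lceil>lam * t\<rceil>}"
    proof
      fix i assume "i \<in> {i\<in>{..<n}. real (Suc i) < lam * t}"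
      then have "real (Suc i) < lam * t" by simp
      then have "real i < \<lceil>lam * t\<rceil>" by linarith
      then show "i \<in> {..< nat \<lceil>lam * t\<rceil>}" by simp
    qed
    then have "card {i\<in>{..<n}. real (Suc i) < lam * t} \<le> nat \<lceil>lam * t\<rceil>"
      using card_mono[of "{..< nat \<lceil>lam * t\<rceil>}"] by simp
    then have "real (card {i\<in>{..<n}. real (Suc i) < lam * t}) \<le> real (nat \<lceil>lam * t\<rceil>)"
      by (simp only: of_nat_le_iff)
    also have "\<dots> \<le> lam * t + 1"
    proof -
      have lt: "0 \<le> lam * t" using lam t by simp
      then have "real (nat \<lceil>lam * t\<rceil>) = real_of_int \<lceil>lam * t\<rceil>" by simp
      also have "\<dots> \<le> lam * t + 1" by linarith
      finally show ?thesis .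
    qed
    finally show ?thesis .
  qed
  also have "(\<Sum>i<n. r ^ Suc i) \<le> 1 / (1 - r)"
  proof -
    have "(\<Sum>i<n. r ^ Suc i) \<le> (\<Sum>i<n. r ^ i)"
      using r by (intro sum_mono) (simp add: less_imp_le mult_left_le_one_le)
    also have "\<dots> = (1 - r ^ n) / (1 - r)" using r by (simp add: sum_gp_strict)
    also have "\<dots> \<le> 1 / (1 - r)" using r by (simp add: divide_right_mono)
    finally show ?thesis .
  qed
  finally show ?thesis unfolding s_def r_def by (simp add: field_simps)
qed

lemma moment_finite:
  fixes \<mu> :: "real measure" and \<delta> :: real
  assumes s: "sets \<mu> = sets borel" and d: "0 < \<delta>"
    and i1: "integrable \<mu> (\<lambda>y. exp (\<delta> * y))" and i2: "integrable \<mu> (\<lambda>y. exp (- \<delta> * y))"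
  shows "(\<integral>\<^sup>+ y. ennreal (\<bar>y\<bar> ^ n) \<partial>\<mu>) < \<infinity>"
proof -
  have meas: "(\<lambda>y. \<bar>y\<bar> ^ n) \<in> borel_measurable \<mu>"
    unfolding measurable_cong_sets[OF s refl] by measurable
  have "integrable \<mu> (\<lambda>y. fact n / \<delta> ^ n * (exp (\<delta> * y) + exp (- \<delta> * y)))"
    using i1 i2 by auto
  then have "integrable \<mu> (\<lambda>y. \<bar>y\<bar> ^ n)"
  proof (rule Bochner_Integration.integrable_bound)
    show "AE x in \<mu>. norm (\<bar>x\<bar> ^ n) \<le> norm (fact n / \<delta> ^ n * (exp (\<delta> * x) + exp (- \<delta> * x)))"
      using abs_pow_le_exp[OF d] d by (auto intro!: AE_I2 simp: abs_mult)
  qed (use meas in auto)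
  then show ?thesis
    by (simp add: integrable_iff_bounded)
qed

lemma (in prob_space) core:
  fixes e Xs :: "nat \<Rightarrow> nat \<Rightarrow> 'a \<Rightarrow> real" and \<mu> :: "real measure"
    and x :: "nat \<Rightarrow> real" and N :: nat and c t :: real and d :: nat
  assumes hyp: "\<forall>i j. 1 \<le> i \<longrightarrow> j \<in> {1..d} \<longrightarrow>
             distributed M lborel (e i j) (exponential_density 1)
             \<and> Xs i j \<in> borel_measurable M \<and> distr M borel (Xs i j) = \<mu>"
    and indep: "indep_vars (\<lambda>_. borel)
            (\<lambda>k. case k of Inl (i, j) \<Rightarrow> e i j | Inr (i, j) \<Rightarrow> Xs i j)
            (Inl ` ({1..} \<times> {1..d}) \<union> Inr ` ({1..} \<times> {1..d}))"
    and m2: "(\<integral>\<^sup>+ y. ennreal (\<bar>y\<bar> ^ (2 * N)) \<partial>\<mu>) = ennreal c" and c: "0 \<le> c"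
    and N: "1 \<le> N" and t: "1 \<le> t"
  shows "(\<integral>\<^sup>+ \<omega>. ennreal ((1 + (\<Sum>l\<in>{1..d}. \<bar>cp_walk x e Xs t \<omega> l - x l\<bar>)) ^ N) \<partial>M)
     \<le> ennreal (max 1 ((c + 1) / 2) *
          ((1 + d * ((exp 2 - 1) + 1 + 1 / (1 - exp (- 1 / (2 * N))))) * t) ^ N)"
proof -
  define lam where "lam = exp 2 - (1::real)"
  define r where "r = exp (- 1 / (2 * real N))"
  define K0 where "K0 = 1 + d * (lam + 1 + 1 / (1 - r))"
  define C1 where "C1 = max 1 ((c + 1) / 2)"
  have lam: "0 < lam" by (simp add: lam_def)
  have r: "0 < r" "r < 1" using N by (auto simp: r_def)
  define T where "T j i \<omega> = (\<Sum>k\<in>{1..Suc i}. e k j \<omega>)" for j i \<omega>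
  define Z where "Z j i \<omega> = Xs (Suc i) j \<omega> * (if T j i \<omega> \<le> t then 1 else 0)" for j i \<omega>
  define z where "z j i \<omega> = \<bar>Z j i \<omega>\<bar>" for j i \<omega>
  define pb where "pb i = min 1 (exp (lam * t) / exp 2 ^ Suc i)" for i
  define a where "a i = pb i powr (1 / (2 * real N))" for i
  define F where "F n \<omega> = (1 + (\<Sum>j\<in>{1..d}. \<Sum>i<n. z j i \<omega>)) ^ N" for n \<omega>
  have cpY: "cp_walk x e Xs t \<omega> l - x l = suminf (\<lambda>i. Z l i \<omega>)" for \<omega> l
    by (simp add: cp_walk_def Z_def T_def)
  have z0: "0 \<le> z j i \<omega>" for j i \<omega> by (simp add: z_def)
  have pb: "0 < pb i" "pb i \<le> 1" for i by (auto simp: pb_def)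
  have a: "0 < a i" for i using pb(1)[of i] by (simp add: a_def)
  have aN: "a i ^ N = sqrt (pb i)" for i
  proof -
    have "a i ^ N = pb i powr (real N * (1 / (2 * real N)))"
      unfolding a_def using pb(1)[of i] by (simp add: powr_power)
    also have "real N * (1 / (2 * real N)) = 1 / 2" using N by simp
    finally show ?thesis using pb(1)[of i] by (simp add: powr_half_sqrt)
  qed

  have em: "e k j \<in> borel_measurable M" if "1 \<le> k" "j \<in> {1..d}" for k j
    using hyp that distributed_measurable by fastforce
  have Xm: "Xs k j \<in> borel_measurable M" if "1 \<le> k" "j \<in> {1..d}" for k j
    using hyp that by blast
  have Tm: "T j i \<in> borel_measurable M" if "j \<in> {1..d}" for j i
    unfolding T_def by (intro borel_measurable_sum em) (use that in auto)
  have Zm: "Z j i \<in> borel_measurable M" if j: "j \<in> {1..d}" for j i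
  proof -
    have [measurable]: "Xs (Suc i) j \<in> borel_measurable M" "T j i \<in> borel_measurable M"
      using Xm Tm j by auto
    show ?thesis unfolding Z_def by measurable
  qed
  have zm: "z j i \<in> borel_measurable M" if j: "j \<in> {1..d}" for j i
    unfolding z_def using Zm[OF j] by measurable
  have Fm: "F n \<in> borel_measurable M" for n
    unfolding F_def by (intro borel_measurable_power borel_measurable_add borel_measurable_sum zm) auto

  have S1: "emeasure M {\<omega>\<in>space M. T j i \<omega> \<le> t} \<le> ennreal (pb i)" if j: "j \<in> {1..d}" for j i
  proof -
    let ?Y = "\<lambda>k. case k of Inl (i, j) \<Rightarrow> e i j | Inr (i, j) \<Rightarrow> Xs i j"
    have "indep_vars (\<lambda>_. borel) ?Y ((\<lambda>k. Inl (k, j)) ` {1..Suc i})"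
      by (rule indep_vars_subset[OF indep]) (use j in auto)
    then have "indep_vars (\<lambda>_. borel) (\<lambda>k. ?Y (Inl (k, j))) {1..Suc i}"
      by (rule indep_vars_reindex) (auto intro: inj_onI)
    then have ind: "indep_vars (\<lambda>_. borel) (\<lambda>k. e k j) {1..Suc i}" by simp
    have D: "distributed M lborel (\<lambda>\<omega>. \<Sum>k\<in>{1..Suc i}. e k j \<omega>) (erlang_density (card {1..Suc i} - 1) 1)"
      by (rule exponential_distributed_sum[OF _ _ _ _ ind]) (use hyp j in auto)
    then have D': "distributed M lborel (T j i) (erlang_density i 1)"
      by (simp add: T_def[abs_def])
    have "emeasure M {\<omega>\<in>space M. T j i \<omega> \<le> t} \<le> ennreal (exp (lam * t) / (1 + lam) ^ Suc i)"
      by (rule erlang_chernoff[OF D' lam])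
    then have le1: "emeasure M {\<omega>\<in>space M. T j i \<omega> \<le> t} \<le> ennreal (exp (lam * t) / exp 2 ^ Suc i)"
      by (simp add: lam_def)
    have le2: "emeasure M {\<omega>\<in>space M. T j i \<omega> \<le> t} \<le> ennreal 1"
      using emeasure_le_1 by simp
    show ?thesis
    proof (cases "exp (lam * t) / exp 2 ^ Suc i \<le> 1")
      case True then have "pb i = exp (lam * t) / exp 2 ^ Suc i" by (simp add: pb_def)
      then show ?thesis using le1 by simp
    next
      case False then have "pb i = 1" by (simp add: pb_def)
      then show ?thesis using le2 by simp
    qed
  qed
  have S2: "(\<integral>\<^sup>+ \<omega>. ennreal (z j i \<omega> ^ N) \<partial>M) \<le> ennreal (a i ^ N * ((c + 1) / 2))" if j: "j \<in> {1..d}" for j i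
  proof -
    define \<eta> where "\<eta> = sqrt (pb i)"
    have \<eta>: "0 < \<eta>" "\<eta> * \<eta> = pb i" using pb[of i] by (auto simp: \<eta>_def)
    define A where "A = {\<omega>\<in>space M. T j i \<omega> \<le> t}"
    have [measurable]: "Xs (Suc i) j \<in> borel_measurable M" "T j i \<in> borel_measurable M"
      using Xm Tm j by auto
    have Asets: "A \<in> sets M" unfolding A_def by measurable
    have pw: "ennreal (z j i \<omega> ^ N) \<le> ennreal (\<eta> / 2) * ennreal (\<bar>Xs (Suc i) j \<omega>\<bar> ^ (2 * N))
                 + ennreal (1 / (2 * \<eta>)) * indicator A \<omega>" if \<omega>: "\<omega> \<in> space M" for \<omega>
    proof (cases "T j i \<omega> \<le> t")
      case True
      define u where "u = \<bar>Xs (Suc i) j \<omega>\<bar> ^ N"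
      have zN: "z j i \<omega> ^ N = u" using True by (simp add: z_def Z_def u_def)
      have u2: "\<bar>Xs (Suc i) j \<omega>\<bar> ^ (2 * N) = u * u" by (simp add: u_def power_mult power2_eq_square mult.commute)
      have "0 \<le> (\<eta> * u - 1)\<^sup>2" by simp
      then have "2 * \<eta> * u \<le> \<eta> * \<eta> * (u * u) + 1" by (simp add: power2_eq_square algebra_simps)
      then have "u \<le> (\<eta> * \<eta> * (u * u) + 1) / (2 * \<eta>)" using \<eta>(1)
        by (subst pos_le_divide_eq) (auto simp: mult_ac)
      also have "(\<eta> * \<eta> * (u * u) + 1) / (2 * \<eta>) = \<eta> / 2 * (u * u) + 1 / (2 * \<eta>)"
        using \<eta>(1) by (simp add: field_simps)
      finally have "u \<le> \<eta> / 2 * (u * u) + 1 / (2 * \<eta>)" .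
      moreover have "0 \<le> u * u" by simp
      ultimately show ?thesis using \<omega> True \<eta>
        by (simp add: zN u2 A_def ennreal_mult'[symmetric] ennreal_plus[symmetric] del: ennreal_plus)
    next
      case False
      then have "z j i \<omega> ^ N = 0" using N by (simp add: z_def Z_def)
      then show ?thesis by (simp only: ennreal_0 zero_le)
    qed
    have "(\<integral>\<^sup>+ \<omega>. ennreal (z j i \<omega> ^ N) \<partial>M)
        \<le> (\<integral>\<^sup>+ \<omega>. ennreal (\<eta> / 2) * ennreal (\<bar>Xs (Suc i) j \<omega>\<bar> ^ (2 * N))
                 + ennreal (1 / (2 * \<eta>)) * indicator A \<omega> \<partial>M)"
      by (intro nn_integral_mono pw)
    also have "\<dots> = ennreal (\<eta> / 2) * (\<integral>\<^sup>+ \<omega>. ennreal (\<bar>Xs (Suc i) j \<omega>\<bar> ^ (2 * N)) \<partial>M)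
                 + ennreal (1 / (2 * \<eta>)) * emeasure M A"
      using Asets by (simp add: nn_integral_add nn_integral_cmult nn_integral_indicator)
    also have "(\<integral>\<^sup>+ \<omega>. ennreal (\<bar>Xs (Suc i) j \<omega>\<bar> ^ (2 * N)) \<partial>M) = ennreal c"
    proof -
      have "(\<integral>\<^sup>+ \<omega>. ennreal (\<bar>Xs (Suc i) j \<omega>\<bar> ^ (2 * N)) \<partial>M)
          = (\<integral>\<^sup>+ y. ennreal (\<bar>y\<bar> ^ (2 * N)) \<partial>distr M borel (Xs (Suc i) j))"
        by (subst nn_integral_distr) auto
      also have "distr M borel (Xs (Suc i) j) = \<mu>" using hyp j by auto
      finally show ?thesis using m2 by simp
    qed
    also have "ennreal (\<eta> / 2) * ennreal c + ennreal (1 / (2 * \<eta>)) * emeasure M A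
        \<le> ennreal (\<eta> / 2) * ennreal c + ennreal (1 / (2 * \<eta>)) * ennreal (pb i)"
      unfolding A_def by (intro add_left_mono mult_left_mono S1[OF j]) auto
    also have "\<dots> = ennreal (\<eta> / 2 * c + 1 / (2 * \<eta>) * pb i)"
      using \<eta> c pb[of i] by (simp add: ennreal_mult'[symmetric] ennreal_plus[symmetric] del: ennreal_plus)
    also have "\<eta> / 2 * c + 1 / (2 * \<eta>) * pb i = a i ^ N * ((c + 1) / 2)"
      using \<eta> by (simp add: aN \<eta>_def[symmetric] field_simps)
    finally show ?thesis .
  qed
  have S4: "(\<integral>\<^sup>+ \<omega>. ennreal (F n \<omega>) \<partial>M) \<le> ennreal (C1 * (K0 * t) ^ N)" for n
  proof -
    define A where "A = (\<Sum>i<n. a i)"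
    define W where "W = 1 + real d * A"
    define b where "b i = a i / a i ^ N" for i
    have A0: "0 \<le> A" unfolding A_def using a by (intro sum_nonneg) (auto intro: less_imp_le)
    have W1: "1 \<le> W" using A0 by (simp add: W_def)
    have b0: "0 \<le> b i" for i using a[of i] by (simp add: b_def)
    have bA: "b i * a i ^ N = a i" for i using a[of i] by (simp add: b_def)
    have A_le: "A \<le> lam * t + 1 + 1 / (1 - r)"
      using sum_a_bound[OF lam _ N, of t n] t unfolding A_def a_def pb_def r_def
      by (simp add: of_nat_mult)
    have W_le: "W \<le> K0 * t"
    proof -
      have q: "0 \<le> 1 / (1 - r)" using r by simp
      have "lam * t + 1 + 1 / (1 - r) \<le> (lam + 1 + 1 / (1 - r)) * t"
      proof -
        have h: "1 / (1 - r) \<le> 1 / (1 - r) * t" using q t by (intro mult_le_cancel_left1[THEN iffD2]) auto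
        have "(lam + 1 + 1 / (1 - r)) * t = lam * t + t + 1 / (1 - r) * t" by (simp add: algebra_simps)
        then show ?thesis using h t by linarith
      qed
      then have "A \<le> (lam + 1 + 1 / (1 - r)) * t" using A_le by linarith
      then have "real d * A \<le> real d * ((lam + 1 + 1 / (1 - r)) * t)" by (intro mult_left_mono) auto
      then show ?thesis using t by (simp add: W_def K0_def algebra_simps)
    qed
    have pw: "F n \<omega> \<le> W ^ (N - 1) * (1 + (\<Sum>j\<in>{1..d}. \<Sum>i<n. b i * z j i \<omega> ^ N))" for \<omega>
    proof -
      define K where "K = insert (0::nat, 0::nat) ({1..d} \<times> {..<n})"
      define w where "w k = (if fst k = 0 then 1 else a (snd k))" for k :: "nat \<times> nat"
      define y where "y k = (if fst k = 0 then 1 else z (fst k) (snd k) \<omega> / a (snd k))" for k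
      have fK: "finite K" "K \<noteq> {}" by (auto simp: K_def)
      have nin: "(0, 0) \<notin> {1..d} \<times> {..<n}" by auto
      have s1: "(\<Sum>k\<in>K. w k * y k) = 1 + (\<Sum>j\<in>{1..d}. \<Sum>i<n. z j i \<omega>)"
      proof -
        have "(\<Sum>k\<in>K. w k * y k) = 1 + (\<Sum>k\<in>{1..d} \<times> {..<n}. w k * y k)"
          unfolding K_def using nin by (simp add: w_def y_def)
        also have "(\<Sum>k\<in>{1..d} \<times> {..<n}. w k * y k) = (\<Sum>k\<in>{1..d} \<times> {..<n}. z (fst k) (snd k) \<omega>)"
          using a by (intro sum.cong) (auto simp: w_def y_def less_imp_neq[OF a, symmetric])
        also have "\<dots> = (\<Sum>j\<in>{1..d}. \<Sum>i<n. z j i \<omega>)"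
          by (simp add: sum.cartesian_product split_def)
        finally show ?thesis .
      qed
      have s2: "(\<Sum>k\<in>K. w k) = W"
      proof -
        have "(\<Sum>k\<in>K. w k) = 1 + (\<Sum>k\<in>{1..d} \<times> {..<n}. a (snd k))"
          unfolding K_def using nin by (auto simp: w_def intro!: sum.cong)
        also have "(\<Sum>k\<in>{1..d} \<times> {..<n}. a (snd k)) = (\<Sum>j\<in>{1..d}. \<Sum>i<n. a i)"
          by (subst sum.cartesian_product) (simp add: split_def)
        also have "\<dots> = real d * A" by (simp add: A_def)
        finally show ?thesis by (simp add: W_def)
      qed
      have s3: "(\<Sum>k\<in>K. w k * y k ^ N) = 1 + (\<Sum>j\<in>{1..d}. \<Sum>i<n. b i * z j i \<omega> ^ N)"
      proof -
        have "(\<Sum>k\<in>K. w k * y k ^ N) = 1 + (\<Sum>k\<in>{1..d} \<times> {..<n}. w k * y k ^ N)"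
          unfolding K_def using nin by (simp add: w_def y_def)
        also have "(\<Sum>k\<in>{1..d} \<times> {..<n}. w k * y k ^ N) = (\<Sum>k\<in>{1..d} \<times> {..<n}. b (snd k) * z (fst k) (snd k) \<omega> ^ N)"
          by (intro sum.cong) (auto simp: w_def y_def b_def power_divide)
        also have "\<dots> = (\<Sum>j\<in>{1..d}. \<Sum>i<n. b i * z j i \<omega> ^ N)"
          by (simp add: sum.cartesian_product split_def)
        finally show ?thesis .
      qed
      have "(\<Sum>k\<in>K. w k * y k) ^ N \<le> (\<Sum>k\<in>K. w k) ^ (N - 1) * (\<Sum>k\<in>K. w k * y k ^ N)"
        by (rule jensen_pow[OF fK _ _ N]) (use a z0 in \<open>auto simp: w_def y_def intro!: divide_nonneg_pos\<close>)
      then show ?thesis unfolding s1 s2 s3 F_def .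
    qed
    have "(\<integral>\<^sup>+ \<omega>. ennreal (F n \<omega>) \<partial>M)
        \<le> (\<integral>\<^sup>+ \<omega>. ennreal (W ^ (N - 1)) * (1 + (\<Sum>j\<in>{1..d}. \<Sum>i<n. ennreal (b i) * ennreal (z j i \<omega> ^ N))) \<partial>M)"
    proof (intro nn_integral_mono)
      fix \<omega>
      have nn: "0 \<le> (\<Sum>j\<in>{1..d}. \<Sum>i<n. b i * z j i \<omega> ^ N)"
        using b0 z0 by (intro sum_nonneg) auto
      have "ennreal (F n \<omega>) \<le> ennreal (W ^ (N - 1) * (1 + (\<Sum>j\<in>{1..d}. \<Sum>i<n. b i * z j i \<omega> ^ N)))"
        using pw by (intro ennreal_leI) auto
      also have "\<dots> = ennreal (W ^ (N - 1)) * (1 + (\<Sum>j\<in>{1..d}. \<Sum>i<n. ennreal (b i) * ennreal (z j i \<omega> ^ N)))"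
      proof -
        have i1: "(\<Sum>j\<in>{1..d}. \<Sum>i<n. ennreal (b i) * ennreal (z j i \<omega> ^ N))
            = (\<Sum>j\<in>{1..d}. \<Sum>i<n. ennreal (b i * z j i \<omega> ^ N))"
          using b0 z0 by (intro sum.cong refl) (simp add: ennreal_mult')
        also have "\<dots> = (\<Sum>j\<in>{1..d}. ennreal (\<Sum>i<n. b i * z j i \<omega> ^ N))"
          using b0 z0 by (intro sum.cong refl sum_ennreal) auto
        also have "\<dots> = ennreal (\<Sum>j\<in>{1..d}. \<Sum>i<n. b i * z j i \<omega> ^ N)"
          using b0 z0 by (intro sum_ennreal sum_nonneg) auto
        finally have i1': "(\<Sum>j\<in>{1..d}. \<Sum>i<n. ennreal (b i) * ennreal (z j i \<omega> ^ N))
            = ennreal (\<Sum>j\<in>{1..d}. \<Sum>i<n. b i * z j i \<omega> ^ N)" .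
        have "ennreal (W ^ (N - 1) * (1 + (\<Sum>j\<in>{1..d}. \<Sum>i<n. b i * z j i \<omega> ^ N)))
            = ennreal (W ^ (N - 1)) * ennreal (1 + (\<Sum>j\<in>{1..d}. \<Sum>i<n. b i * z j i \<omega> ^ N))"
          using W1 nn by (intro ennreal_mult) auto
        also have "ennreal (1 + (\<Sum>j\<in>{1..d}. \<Sum>i<n. b i * z j i \<omega> ^ N))
            = 1 + ennreal (\<Sum>j\<in>{1..d}. \<Sum>i<n. b i * z j i \<omega> ^ N)"
          using nn by (subst ennreal_plus) auto
        finally show ?thesis unfolding i1' .
      qed
      finally show "ennreal (F n \<omega>) \<le> ennreal (W ^ (N - 1)) * (1 + (\<Sum>j\<in>{1..d}. \<Sum>i<n. ennreal (b i) * ennreal (z j i \<omega> ^ N)))" .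
    qed
    also have "\<dots> = ennreal (W ^ (N - 1)) * (1 + (\<Sum>j\<in>{1..d}. \<Sum>i<n. ennreal (b i) * (\<integral>\<^sup>+ \<omega>. ennreal (z j i \<omega> ^ N) \<partial>M)))"
    proof -
      have zNm: "(\<lambda>\<omega>. ennreal (z j i \<omega> ^ N)) \<in> borel_measurable M" if "j \<in> {1..d}" for j i
        using zm[OF that] by measurable
      have m1: "(\<lambda>\<omega>. \<Sum>i<n. ennreal (b i) * ennreal (z j i \<omega> ^ N)) \<in> borel_measurable M" if j: "j \<in> {1..d}" for j
      proof -
        have [measurable]: "\<And>i. (\<lambda>\<omega>. ennreal (z j i \<omega> ^ N)) \<in> borel_measurable M" using zNm[OF j] .
        show ?thesis by measurable
      qed
      have m2': "(\<lambda>\<omega>. \<Sum>j\<in>{1..d}. \<Sum>i<n. ennreal (b i) * ennreal (z j i \<omega> ^ N)) \<in> borel_measurable M"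
        by (intro borel_measurable_sum m1)
      have "(\<integral>\<^sup>+ \<omega>. ennreal (W ^ (N - 1)) * (1 + (\<Sum>j\<in>{1..d}. \<Sum>i<n. ennreal (b i) * ennreal (z j i \<omega> ^ N))) \<partial>M)
          = ennreal (W ^ (N - 1)) * (\<integral>\<^sup>+ \<omega>. 1 + (\<Sum>j\<in>{1..d}. \<Sum>i<n. ennreal (b i) * ennreal (z j i \<omega> ^ N)) \<partial>M)"
        using m2' by (intro nn_integral_cmult) auto
      also have "(\<integral>\<^sup>+ \<omega>. 1 + (\<Sum>j\<in>{1..d}. \<Sum>i<n. ennreal (b i) * ennreal (z j i \<omega> ^ N)) \<partial>M)
          = 1 + (\<integral>\<^sup>+ \<omega>. (\<Sum>j\<in>{1..d}. \<Sum>i<n. ennreal (b i) * ennreal (z j i \<omega> ^ N)) \<partial>M)"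
        using m2' by (subst nn_integral_add) (auto simp: emeasure_space_1)
      also have "(\<integral>\<^sup>+ \<omega>. (\<Sum>j\<in>{1..d}. \<Sum>i<n. ennreal (b i) * ennreal (z j i \<omega> ^ N)) \<partial>M)
          = (\<Sum>j\<in>{1..d}. \<integral>\<^sup>+ \<omega>. (\<Sum>i<n. ennreal (b i) * ennreal (z j i \<omega> ^ N)) \<partial>M)"
        by (rule nn_integral_sum) (rule m1)
      also have "\<dots> = (\<Sum>j\<in>{1..d}. \<Sum>i<n. ennreal (b i) * (\<integral>\<^sup>+ \<omega>. ennreal (z j i \<omega> ^ N) \<partial>M))"
      proof (rule sum.cong[OF refl])
        fix j assume j: "j \<in> {1..d}"
        have "(\<integral>\<^sup>+ \<omega>. (\<Sum>i<n. ennreal (b i) * ennreal (z j i \<omega> ^ N)) \<partial>M)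
            = (\<Sum>i<n. \<integral>\<^sup>+ \<omega>. ennreal (b i) * ennreal (z j i \<omega> ^ N) \<partial>M)"
          by (rule nn_integral_sum) (use zNm[OF j] in auto)
        also have "\<dots> = (\<Sum>i<n. ennreal (b i) * (\<integral>\<^sup>+ \<omega>. ennreal (z j i \<omega> ^ N) \<partial>M))"
          by (intro sum.cong refl nn_integral_cmult zNm[OF j])
        finally show "(\<integral>\<^sup>+ \<omega>. (\<Sum>i<n. ennreal (b i) * ennreal (z j i \<omega> ^ N)) \<partial>M)
            = (\<Sum>i<n. ennreal (b i) * (\<integral>\<^sup>+ \<omega>. ennreal (z j i \<omega> ^ N) \<partial>M))" .
      qed
      finally show ?thesis .
    qed
    also have "\<dots> \<le> ennreal (W ^ (N - 1)) * (1 + (\<Sum>j\<in>{1..d}. \<Sum>i<n. ennreal (b i) * ennreal (a i ^ N * ((c + 1) / 2))))"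
      by (intro mult_left_mono add_left_mono sum_mono S2) auto
    also have "\<dots> = ennreal (W ^ (N - 1) * (1 + real d * A * ((c + 1) / 2)))"
    proof -
      have q: "0 \<le> (c + 1) / 2" using c by simp
      have anq: "0 \<le> a i * ((c + 1) / 2)" for i using a[of i] q by simp
      have "(\<Sum>j\<in>{1..d}. \<Sum>i<n. ennreal (b i) * ennreal (a i ^ N * ((c + 1) / 2)))
          = (\<Sum>j\<in>{1..d}. \<Sum>i<n. ennreal (a i * ((c + 1) / 2)))"
      proof (intro sum.cong refl)
        fix j i
        have "ennreal (b i) * ennreal (a i ^ N * ((c + 1) / 2)) = ennreal (b i * (a i ^ N * ((c + 1) / 2)))"
          by (rule ennreal_mult'[symmetric]) (rule b0)
        also have "b i * (a i ^ N * ((c + 1) / 2)) = a i * ((c + 1) / 2)"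
          by (simp only: mult.assoc[symmetric] bA)
        finally show "ennreal (b i) * ennreal (a i ^ N * ((c + 1) / 2)) = ennreal (a i * ((c + 1) / 2))" .
      qed
      also have "\<dots> = (\<Sum>j\<in>{1..d}. ennreal (\<Sum>i<n. a i * ((c + 1) / 2)))"
        by (intro sum.cong refl sum_ennreal anq)
      also have "\<dots> = ennreal (\<Sum>j\<in>{1..d}. \<Sum>i<n. a i * ((c + 1) / 2))"
        by (intro sum_ennreal sum_nonneg anq)
      also have "(\<Sum>j\<in>{1..d}. \<Sum>i<n. a i * ((c + 1) / 2)) = real d * A * ((c + 1) / 2)"
        by (simp add: A_def sum_distrib_right)
      finally have ss: "(\<Sum>j\<in>{1..d}. \<Sum>i<n. ennreal (b i) * ennreal (a i ^ N * ((c + 1) / 2)))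
          = ennreal (real d * A * ((c + 1) / 2))" .
      have nn2: "0 \<le> real d * A * ((c + 1) / 2)" using A0 q by simp
      have "ennreal (W ^ (N - 1) * (1 + real d * A * ((c + 1) / 2)))
          = ennreal (W ^ (N - 1)) * ennreal (1 + real d * A * ((c + 1) / 2))"
        using W1 nn2 by (intro ennreal_mult) auto
      also have "ennreal (1 + real d * A * ((c + 1) / 2)) = 1 + ennreal (real d * A * ((c + 1) / 2))"
        using nn2 by (subst ennreal_plus) auto
      finally show ?thesis unfolding ss by simp
    qed
    also have "\<dots> \<le> ennreal (C1 * (K0 * t) ^ N)"
    proof (intro ennreal_leI)
      have "1 + real d * A * ((c + 1) / 2) \<le> C1 * W"
      proof -
        have "1 \<le> C1" "(c + 1) / 2 \<le> C1" by (auto simp: C1_def)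
        then have "1 + real d * A * ((c + 1) / 2) \<le> C1 + real d * A * C1"
          using A0 by (intro add_mono mult_left_mono) auto
        then show ?thesis by (simp add: W_def algebra_simps)
      qed
      then have "W ^ (N - 1) * (1 + real d * A * ((c + 1) / 2)) \<le> W ^ (N - 1) * (C1 * W)"
        using W1 by (intro mult_left_mono) auto
      also have "\<dots> = C1 * W ^ N" using N by (cases N) (auto simp: algebra_simps)
      also have "\<dots> \<le> C1 * (K0 * t) ^ N"
        using W1 W_le by (intro mult_left_mono power_mono) (auto simp: C1_def)
      finally show "W ^ (N - 1) * (1 + real d * A * ((c + 1) / 2)) \<le> C1 * (K0 * t) ^ N" .
    qed
    finally show ?thesis .
  qed
  have incF: "incseq (\<lambda>n \<omega>. ennreal (F n \<omega>))"
  proof (intro incseq_SucI le_funI ennreal_leI)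
    fix n \<omega>
    have "(\<Sum>j\<in>{1..d}. \<Sum>i<n. z j i \<omega>) \<le> (\<Sum>j\<in>{1..d}. \<Sum>i<Suc n. z j i \<omega>)"
      using z0 by (intro sum_mono) auto
    moreover have "0 \<le> (\<Sum>j\<in>{1..d}. \<Sum>i<n. z j i \<omega>)" using z0 by (intro sum_nonneg) auto
    ultimately show "F n \<omega> \<le> F (Suc n) \<omega>" unfolding F_def by (intro power_mono) auto
  qed
  have SUPeq: "(\<integral>\<^sup>+ \<omega>. (SUP n. ennreal (F n \<omega>)) \<partial>M) = (SUP n. \<integral>\<^sup>+ \<omega>. ennreal (F n \<omega>) \<partial>M)"
    by (rule nn_integral_monotone_convergence_SUP[OF incF]) (use Fm in auto)
  have SUPle: "(\<integral>\<^sup>+ \<omega>. (SUP n. ennreal (F n \<omega>)) \<partial>M) \<le> ennreal (C1 * (K0 * t) ^ N)"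
    unfolding SUPeq by (intro SUP_least S4)
  have AEfin: "AE \<omega> in M. (SUP n. ennreal (F n \<omega>)) \<noteq> \<infinity>"
    by (rule nn_integral_PInf_AE) (use Fm SUPle in \<open>auto simp: top_unique\<close>)
  have S5: "AE \<omega> in M. ennreal ((1 + (\<Sum>l\<in>{1..d}. \<bar>cp_walk x e Xs t \<omega> l - x l\<bar>)) ^ N)
      \<le> (SUP n. ennreal (F n \<omega>))"
  proof (rule AE_mp[OF AEfin], rule AE_I2, intro impI)
    fix \<omega> assume \<omega>: "\<omega> \<in> space M" and fin: "(SUP n. ennreal (F n \<omega>)) \<noteq> \<infinity>"
    define B where "B = enn2real (SUP n. ennreal (F n \<omega>))"
    have SB: "(SUP n. ennreal (F n \<omega>)) = ennreal B"
      unfolding B_def by (rule ennreal_enn2real[symmetric]) (use fin in \<open>simp add: less_top[symmetric]\<close>)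
    have B0: "0 \<le> B" by (simp add: B_def)
    have FB: "F n \<omega> \<le> B" for n
    proof -
      have "ennreal (F n \<omega>) \<le> ennreal B" unfolding SB[symmetric] by (rule SUP_upper) auto
      then show ?thesis using B0 by (simp add: ennreal_le_iff)
    qed
    have summ: "summable (\<lambda>i. Z l i \<omega>)" if l: "l \<in> {1..d}" for l
    proof (rule summable_rabs_cancel, rule summableI_nonneg_bounded)
      show "0 \<le> \<bar>Z l i \<omega>\<bar>" for i by simp
      fix n
      have "(\<Sum>i<n. \<bar>Z l i \<omega>\<bar>) = (\<Sum>i<n. z l i \<omega>)" by (simp add: z_def)
      also have "\<dots> \<le> (\<Sum>j\<in>{1..d}. \<Sum>i<n. z j i \<omega>)"
        using l z0 by (intro member_le_sum sum_nonneg) auto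
      also have "\<dots> \<le> 1 + (\<Sum>j\<in>{1..d}. \<Sum>i<n. z j i \<omega>)" by simp
      also have "\<dots> \<le> F n \<omega>" unfolding F_def
        using N z0 by (intro self_le_power) (auto intro!: sum_nonneg)
      also have "\<dots> \<le> B" by (rule FB)
      finally show "(\<Sum>i<n. \<bar>Z l i \<omega>\<bar>) \<le> B" .
    qed
    define G where "G n = (1 + (\<Sum>l\<in>{1..d}. \<bar>\<Sum>i<n. Z l i \<omega>\<bar>)) ^ N" for n
    have Glim: "G \<longlonglongrightarrow> (1 + (\<Sum>l\<in>{1..d}. \<bar>suminf (\<lambda>i. Z l i \<omega>)\<bar>)) ^ N"
      unfolding G_def by (intro tendsto_intros summable_LIMSEQ summ)
    have GF: "G n \<le> F n \<omega>" for n
      unfolding G_def F_def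
    proof (intro power_mono add_left_mono sum_mono)
      fix l show "\<bar>\<Sum>i<n. Z l i \<omega>\<bar> \<le> (\<Sum>i<n. z l i \<omega>)" unfolding z_def by (rule sum_abs)
    qed (auto intro!: sum_nonneg)
    have "ennreal ((1 + (\<Sum>l\<in>{1..d}. \<bar>suminf (\<lambda>i. Z l i \<omega>)\<bar>)) ^ N) \<le> (SUP n. ennreal (F n \<omega>))"
    proof (rule Lim_bounded)
      show "(\<lambda>n. ennreal (G n)) \<longlonglongrightarrow> ennreal ((1 + (\<Sum>l\<in>{1..d}. \<bar>suminf (\<lambda>i. Z l i \<omega>)\<bar>)) ^ N)"
        using Glim by (rule tendsto_ennrealI)
      show "\<forall>n\<ge>0. ennreal (G n) \<le> (SUP n. ennreal (F n \<omega>))"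
        using GF by (auto intro: order_trans[OF _ SUP_upper] ennreal_leI)
    qed
    then show "ennreal ((1 + (\<Sum>l\<in>{1..d}. \<bar>cp_walk x e Xs t \<omega> l - x l\<bar>)) ^ N) \<le> (SUP n. ennreal (F n \<omega>))"
      by (simp add: cpY)
  qed
  have "(\<integral>\<^sup>+ \<omega>. ennreal ((1 + (\<Sum>l\<in>{1..d}. \<bar>cp_walk x e Xs t \<omega> l - x l\<bar>)) ^ N) \<partial>M)
      \<le> (\<integral>\<^sup>+ \<omega>. (SUP n. ennreal (F n \<omega>)) \<partial>M)"
    by (rule nn_integral_mono_AE[OF S5])
  also note SUPle
  finally show ?thesis by (simp add: C1_def K0_def lam_def r_def)
qed

theorem lemma4p2:
  fixes \<mu> :: "real measure" and p :: real and d :: nat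
  assumes law: "prob_space \<mu>" "sets \<mu> = sets borel"
    and mean: "integrable \<mu> (\<lambda>y. y)" "(\<integral>y. y \<partial>\<mu>) = 0"
    and var: "integrable \<mu> (\<lambda>y. y\<^sup>2)" "(\<integral>y. y\<^sup>2 \<partial>\<mu>) = 1"
    and expmom: "\<exists>\<delta>0>0. \<forall>\<delta>. \<bar>\<delta>\<bar> < \<delta>0 \<longrightarrow> integrable \<mu> (\<lambda>y. exp (\<delta> * y))"
    and p: "p \<ge> 1" and d: "d \<ge> 2"
  shows "\<exists>C::real. \<forall>(M :: 'a measure) (e :: nat \<Rightarrow> nat \<Rightarrow> 'a \<Rightarrow> real)
            (Xs :: nat \<Rightarrow> nat \<Rightarrow> 'a \<Rightarrow> real) (t :: real) (x :: nat \<Rightarrow> real).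
      prob_space M
      \<longrightarrow> (\<forall>i j. 1 \<le> i \<longrightarrow> j \<in> {1..d} \<longrightarrow>
             distributed M lborel (e i j) (exponential_density 1)
             \<and> Xs i j \<in> borel_measurable M \<and> distr M borel (Xs i j) = \<mu>)
      \<longrightarrow> prob_space.indep_vars M (\<lambda>_. borel)
            (\<lambda>k. case k of Inl (i, j) \<Rightarrow> e i j | Inr (i, j) \<Rightarrow> Xs i j)
            (Inl ` ({1..} \<times> {1..d}) \<union> Inr ` ({1..} \<times> {1..d}))
      \<longrightarrow> t \<ge> 1
      \<longrightarrow> x \<in> weyl_chamber d
      \<longrightarrow> (\<forall>i\<in>{1..<d}. x (Suc i) - x i \<ge> 1)
      \<longrightarrow> integrable M (\<lambda>\<omega>. \<bar>Delta d (cp_walk x e Xs t \<omega>)\<bar> powr p)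
          \<and> (\<integral>\<omega>. \<bar>Delta d (cp_walk x e Xs t \<omega>)\<bar> powr p \<partial>M) powr (1 / p)
              \<le> C * Delta d x * t ^ (d\<^sup>2)"
proof -
  obtain \<delta>0 where \<delta>0: "\<delta>0 > 0" and h\<delta>: "\<And>\<delta>. \<bar>\<delta>\<bar> < \<delta>0 \<Longrightarrow> integrable \<mu> (\<lambda>y. exp (\<delta> * y))"
    using expmom by blast
  define \<delta> where "\<delta> = \<delta>0 / 2"
  have \<delta>: "0 < \<delta>" using \<delta>0 by (simp add: \<delta>_def)
  have i1: "integrable \<mu> (\<lambda>y. exp (\<delta> * y))" using \<delta>0 by (intro h\<delta>) (simp add: \<delta>_def)
  have i2: "integrable \<mu> (\<lambda>y. exp (- \<delta> * y))" using \<delta>0 h\<delta>[of "- \<delta>"] by (simp add: \<delta>_def)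
  define m where "m = (\<Sum>j\<in>{1..d}. j - 1)"
  define N where "N = nat \<lceil>p * real m\<rceil>"
  have m1: "1 \<le> m"
  proof -
    have "2 - 1 \<le> m" unfolding m_def using d by (intro member_le_sum) auto
    then show ?thesis by simp
  qed
  have m_le: "m + 1 \<le> d ^ 2"
  proof -
    have "m \<le> (\<Sum>j\<in>{1..d}. d - 1)" unfolding m_def by (intro sum_mono) auto
    also have "\<dots> = d * (d - 1)" by simp
    finally have "m \<le> d * (d - 1)" .
    moreover have "d * (d - 1) + 1 \<le> d ^ 2"
    proof -
      obtain k where k: "d = Suc k" using d by (cases d) auto
      show ?thesis unfolding k by (simp add: power2_eq_square)
    qed
    ultimately show ?thesis by linarith
  qed
  have pm: "p * real m \<le> real N" unfolding N_def by linarith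
  have N1: "1 \<le> N"
  proof -
    have "1 * 1 \<le> p * real m" using p m1 by (intro mult_mono) auto
    then show ?thesis unfolding N_def by linarith
  qed
  have N_le: "real N \<le> p * real (d ^ 2)"
  proof -
    have "real N \<le> p * real m + 1"
    proof -
      have "0 \<le> p * real m" using p by simp
      then have "real N = real_of_int \<lceil>p * real m\<rceil>" unfolding N_def by simp
      also have "\<dots> \<le> p * real m + 1" by linarith
      finally show ?thesis .
    qed
    also have "\<dots> \<le> p * real m + p" using p by simp
    also have "\<dots> = p * real (m + 1)" by (simp add: algebra_simps)
    also have "\<dots> \<le> p * real (d ^ 2)"
    proof -
      have "real (m + 1) \<le> real (d ^ 2)" using m_le by (simp only: of_nat_le_iff)
      then show ?thesis using p by (intro mult_left_mono) auto
    qed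
    finally show ?thesis .
  qed
  have mfin: "(\<integral>\<^sup>+ y. ennreal (\<bar>y\<bar> ^ (2 * N)) \<partial>\<mu>) < \<infinity>"
    by (rule moment_finite[OF law(2) \<delta> i1 i2])
  define c where "c = enn2real (\<integral>\<^sup>+ y. ennreal (\<bar>y\<bar> ^ (2 * N)) \<partial>\<mu>)"
  have m2: "(\<integral>\<^sup>+ y. ennreal (\<bar>y\<bar> ^ (2 * N)) \<partial>\<mu>) = ennreal c"
    unfolding c_def using mfin by (simp add: less_top[symmetric])
  have c: "0 \<le> c" by (simp add: c_def)
  define K0 where "K0 = (1 + d * ((exp 2 - 1) + 1 + 1 / (1 - exp (- 1 / (2 * N)))))"
  define C1 where "C1 = max 1 ((c + 1) / 2)"
  define C where "C = (C1 * K0 ^ N) powr (1 / p)"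
  have K0: "0 \<le> K0"
  proof -
    have "exp (- 1 / (2 * real N)) < 1" using N1 by simp
    then show ?thesis unfolding K0_def by (simp add: add_nonneg_nonneg)
  qed
  have C1: "1 \<le> C1" by (simp add: C1_def)
  show ?thesis
  proof (intro exI[of _ C] allI impI)
    fix M :: "'a measure" and e Xs :: "nat \<Rightarrow> nat \<Rightarrow> 'a \<Rightarrow> real" and t :: real and x :: "nat \<Rightarrow> real"
    assume PM: "prob_space M"
      and hyp: "\<forall>i j. 1 \<le> i \<longrightarrow> j \<in> {1..d} \<longrightarrow>
             distributed M lborel (e i j) (exponential_density 1)
             \<and> Xs i j \<in> borel_measurable M \<and> distr M borel (Xs i j) = \<mu>"
      and indep: "prob_space.indep_vars M (\<lambda>_. borel)
            (\<lambda>k. case k of Inl (i, j) \<Rightarrow> e i j | Inr (i, j) \<Rightarrow> Xs i j)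
            (Inl ` ({1..} \<times> {1..d}) \<union> Inr ` ({1..} \<times> {1..d}))"
      and t: "t \<ge> 1" and W: "x \<in> weyl_chamber d" and g: "\<forall>i\<in>{1..<d}. x (Suc i) - x i \<ge> 1"
    interpret prob_space M by (rule PM)
    define U where "U \<omega> = (\<Sum>l\<in>{1..d}. \<bar>cp_walk x e Xs t \<omega> l - x l\<bar>)" for \<omega>
    have core': "(\<integral>\<^sup>+ \<omega>. ennreal ((1 + U \<omega>) ^ N) \<partial>M) \<le> ennreal (C1 * (K0 * t) ^ N)"
      using core[OF hyp indep m2 c N1 t] unfolding U_def C1_def K0_def .
    define D0 where "D0 = Delta d x"
    have D0: "0 \<le> D0" unfolding D0_def by (rule Delta_nonneg[OF g])
    define f where "f \<omega> = \<bar>Delta d (cp_walk x e Xs t \<omega>)\<bar> powr p" for \<omega>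
    have U0: "0 \<le> U \<omega>" for \<omega> unfolding U_def by (intro sum_nonneg) auto
    have pw: "f \<omega> \<le> D0 powr p * (1 + U \<omega>) ^ N" for \<omega>
    proof -
      have eq: "cp_walk x e Xs t \<omega> = (\<lambda>j. x j + (cp_walk x e Xs t \<omega> j - x j))" by simp
      have b: "\<bar>Delta d (cp_walk x e Xs t \<omega>)\<bar> \<le> D0 * (1 + U \<omega>) ^ m"
        using Delta_bound[OF g, of "\<lambda>j. cp_walk x e Xs t \<omega> j - x j"]
        unfolding eq[symmetric] by (simp add: D0_def U_def m_def)
      have "f \<omega> \<le> (D0 * (1 + U \<omega>) ^ m) powr p"
        unfolding f_def using b p by (intro powr_mono2) auto
      also have "\<dots> = D0 powr p * ((1 + U \<omega>) ^ m) powr p" by (rule powr_mult)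
      also have "((1 + U \<omega>) ^ m) powr p = (1 + U \<omega>) powr (real m * p)"
        using U0[of \<omega>] by (simp add: powr_realpow[symmetric] powr_powr add_pos_nonneg)
      also have "\<dots> \<le> (1 + U \<omega>) powr (real N)"
        using U0[of \<omega>] pm by (intro powr_mono) (auto simp: mult.commute)
      also have "\<dots> = (1 + U \<omega>) ^ N"
        using U0[of \<omega>] by (intro powr_realpow) (simp add: add_pos_nonneg)
      finally show ?thesis using D0 by (simp add: mult_left_mono)
    qed
    have em: "e k j \<in> borel_measurable M" if "1 \<le> k" "j \<in> {1..d}" for k j
      using hyp that distributed_measurable by fastforce
    have cpm: "(\<lambda>\<omega>. cp_walk x e Xs t \<omega> j) \<in> borel_measurable M" if j: "j \<in> {1..d}" for j
    proof -
      have tm: "(\<lambda>\<omega>. Xs (Suc i) j \<omega> * (if (\<Sum>k\<in>{1..Suc i}. e k j \<omega>) \<le> t then 1 else 0)) \<in> borel_measurable M" for i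
      proof -
        have [measurable]: "Xs (Suc i) j \<in> borel_measurable M" using hyp j by auto
        have [measurable]: "(\<lambda>\<omega>. \<Sum>k\<in>{1..Suc i}. e k j \<omega>) \<in> borel_measurable M"
          by (rule borel_measurable_sum) (use em j in auto)
        show ?thesis by measurable
      qed
      have [measurable]: "(\<lambda>\<omega>. \<Sum>i. Xs (Suc i) j \<omega> * (if (\<Sum>k\<in>{1..Suc i}. e k j \<omega>) \<le> t then 1 else 0)) \<in> borel_measurable M"
        by (rule borel_measurable_suminf[OF tm])
      show ?thesis unfolding cp_walk_def by measurable
    qed
    have Dm: "(\<lambda>\<omega>. Delta d (cp_walk x e Xs t \<omega>)) \<in> borel_measurable M"
      unfolding Delta_def
    proof (rule borel_measurable_prod)
      fix j :: nat assume j: "j \<in> {1..d}"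
      show "(\<lambda>\<omega>. \<Prod>i\<in>{1..<j}. cp_walk x e Xs t \<omega> j - cp_walk x e Xs t \<omega> i) \<in> borel_measurable M"
      proof (rule borel_measurable_prod)
        fix i :: nat assume i: "i \<in> {1..<j}"
        then have i': "i \<in> {1..d}" using j by auto
        show "(\<lambda>\<omega>. cp_walk x e Xs t \<omega> j - cp_walk x e Xs t \<omega> i) \<in> borel_measurable M"
          by (rule borel_measurable_diff[OF cpm[OF j] cpm[OF i']])
      qed
    qed
    have fm: "f \<in> borel_measurable M" unfolding f_def using Dm by measurable
    have Um: "U \<in> borel_measurable M"
      unfolding U_def by (intro borel_measurable_sum borel_measurable_abs borel_measurable_diff cpm) auto
    define BB where "BB = D0 powr p * (C1 * (K0 * t) ^ N)"
    have BB0: "0 \<le> BB" unfolding BB_def using C1 K0 t by simp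
    have nnle: "(\<integral>\<^sup>+ \<omega>. ennreal (f \<omega>) \<partial>M) \<le> ennreal BB"
    proof -
      have "(\<integral>\<^sup>+ \<omega>. ennreal (f \<omega>) \<partial>M) \<le> (\<integral>\<^sup>+ \<omega>. ennreal (D0 powr p) * ennreal ((1 + U \<omega>) ^ N) \<partial>M)"
      proof (rule nn_integral_mono)
        fix \<omega>
        have "ennreal (f \<omega>) \<le> ennreal (D0 powr p * (1 + U \<omega>) ^ N)" by (rule ennreal_leI[OF pw])
        also have "\<dots> = ennreal (D0 powr p) * ennreal ((1 + U \<omega>) ^ N)"
          by (rule ennreal_mult) (use U0[of \<omega>] in auto)
        finally show "ennreal (f \<omega>) \<le> ennreal (D0 powr p) * ennreal ((1 + U \<omega>) ^ N)" .
      qed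
      also have "\<dots> = ennreal (D0 powr p) * (\<integral>\<^sup>+ \<omega>. ennreal ((1 + U \<omega>) ^ N) \<partial>M)"
        using Um by (intro nn_integral_cmult) measurable
      also have "\<dots> \<le> ennreal (D0 powr p) * ennreal (C1 * (K0 * t) ^ N)"
        by (intro mult_left_mono core') auto
      also have "\<dots> = ennreal BB" unfolding BB_def by (simp add: ennreal_mult'[symmetric])
      finally show ?thesis .
    qed
    have f0: "0 \<le> f \<omega>" for \<omega> by (simp add: f_def)
    have intf: "integrable M f"
    proof (rule integrableI_nonneg[OF fm])
      show "AE x in M. 0 \<le> f x" using f0 by simp
      show "(\<integral>\<^sup>+ x. ennreal (f x) \<partial>M) < \<infinity>"
        using nnle by (rule le_less_trans) simp
    qed
    have Ile: "integral\<^sup>L M f \<le> BB"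
    proof -
      have "ennreal (integral\<^sup>L M f) \<le> ennreal BB"
        using nnle nn_integral_eq_integral[OF intf] f0 by simp
      then show ?thesis using BB0 by (simp add: ennreal_le_iff)
    qed
    have I0: "0 \<le> integral\<^sup>L M f" using f0 by (simp add: integral_nonneg)
    have "integral\<^sup>L M f powr (1 / p) \<le> BB powr (1 / p)"
      using I0 Ile p by (intro powr_mono2) auto
    also have "BB = D0 powr p * ((C1 * K0 ^ N) * t ^ N)"
      unfolding BB_def by (simp only: power_mult_distrib mult.assoc)
    also have "(D0 powr p * ((C1 * K0 ^ N) * t ^ N)) powr (1 / p)
        = (D0 powr p) powr (1 / p) * ((C1 * K0 ^ N) powr (1 / p) * (t ^ N) powr (1 / p))"
      by (simp only: powr_mult)
    also have "(D0 powr p) powr (1 / p) = D0"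
    proof -
      have "(D0 powr p) powr (1 / p) = D0 powr (p * (1 / p))" by (rule powr_powr)
      also have "p * (1 / p) = 1" using p by simp
      finally show ?thesis using D0 by (simp add: powr_one)
    qed
    also have "(t ^ N) powr (1 / p) = t powr (real N / p)"
    proof -
      have "(t ^ N) powr (1 / p) = (t powr real N) powr (1 / p)" using t by (simp add: powr_realpow)
      also have "\<dots> = t powr (real N * (1 / p))" by (rule powr_powr)
      finally show ?thesis by simp
    qed
    also have "t powr (real N / p) \<le> t powr (real (d ^ 2))"
    proof (rule powr_mono)
      show "real N / p \<le> real (d ^ 2)" using N_le p by (simp add: divide_le_eq mult.commute)
    qed (use t in auto)
    also have "t powr (real (d ^ 2)) = t ^ (d ^ 2)"
      using t by (intro powr_realpow) simp
    finally have fin: "integral\<^sup>L M f powr (1 / p) \<le> D0 * ((C1 * K0 ^ N) powr (1 / p) * t ^ (d ^ 2))"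
      using D0 C1 K0 by (simp add: mult_left_mono)
    show "integrable M (\<lambda>\<omega>. \<bar>Delta d (cp_walk x e Xs t \<omega>)\<bar> powr p)
          \<and> (\<integral>\<omega>. \<bar>Delta d (cp_walk x e Xs t \<omega>)\<bar> powr p \<partial>M) powr (1 / p)
              \<le> C * Delta d x * t ^ (d\<^sup>2)"
      using intf fin unfolding f_def C_def D0_def by (simp add: mult_ac)
  qed
qed

end
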